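(* Let $\sigma>0$, $\bar\gamma>0$, $c_\infty\ge0$, and for $\gamma\in(0,\bar\gamma]$ let $\tau_\gamma:[0,\infty)\to[0,\infty)$ be non-decreasing with $\tau_\gamma(0)=0$, such that there exist $R_1,L\ge0$, $m>0$ with $\sup_{r>0}\tau_\gamma(r)/r\le1+\gamma L$ and $\sup_{r>R_1}\tau_\gamma(r)/r\le1-\gamma m$ for all $\gamma\in(0,\bar\gamma]$. Let $Q_\gamma$ be the Markov kernel on $[0,\infty)$ $$Q_\gamma(w,A)=\delta_0(A)\int_{\mathbb{R}}\bar p_{\sigma^2\gamma}(\tau_\gamma(w)+\gamma c_\infty,g)\varphi(g)dg+\int_{\mathbb{R}}\mathbb{1}_A(\tau_\gamma(w)+\gamma c_\infty-2\sigma\gamma^{1/2}g)\{1-\bar p_{\sigma^2\gamma}(\tau_\gamma(w)+\gamma c_\infty,g)\}\varphi(g)dg,$$ with $\bar p_{\sigma^2\gamma}(a,g)=1\wedge\varphi_{\sigma^2\gamma}(a-\sigma\sqrt\gamma g)/\varphi_{\sigma^2\gamma}(\sigma\sqrt\gamma g)$. Let $a>0$, $\mathcal W_a^*(w)=e^{aw}-1$, and define $\tilde R_a=1\vee R_1\vee[(4a\sigma^2+2c_\infty)/m]\vee16\sigma^2a/m$, $\lambda_a=\exp(-am\tilde R_a/8)$, $C_a=a(c_\infty+2a\sigma^2)e^{a\bar\gamma(c_\infty+2a\sigma^2)}+2\sigma^2(2\pi)^{-1/2}ae^{(a+2\sigma\bar\gamma^{1/2}a)^2/2}$, $R_a=\tilde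 R_a\vee a^{-1}\log\big(1+C_a/(-\log(\lambda_a)\lambda_a^{2\bar\gamma})\big)$, $\bar\gamma_1=\bar\gamma\wedge1/(-\log\lambda_a)\wedge1/(4\sigma^2)$, $B_a=e^{a(c_\infty+2a\sigma^2+LR_a)}$, $D_a=a(c_\infty+2a\sigma^2+LR_a)e^{a\bar\gamma(c_\infty+2a\sigma^2+LR_a)}+2\sigma^2(2\pi)^{-1/2}ae^{(a+2\sigma\bar\gamma^{1/2}a)^2/2}+2\sigma^2a^2\lambda_a^{2\bar\gamma}\mathcal W_a^*(R_a)$. Then for all $w\ge0$ and $\gamma\in(0,\bar\gamma_1]$, $$Q_\gamma\mathcal W_a^*(w)\le\lambda_a^\gamma\mathcal W_a^*(w)\mathbb{1}_{[R_a,\infty)}(w)+B_a^\gamma\mathcal W_a^*(w)\mathbb{1}_{[0,R_a)}(w)+\gamma D_a\mathbb{1}_{[0,R_a)}(w).$$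
   Context: $\varphi$ is the standard normal density and $\varphi_s(t)=(2\pi s)^{-1/2}e^{-t^2/(2s)}$. *)

theory Defs
  imports "HOL-Probability.Probability"
begin

definition phi_var :: "real \<Rightarrow> real \<Rightarrow> real" where
  "phi_var s t = (2 * pi * s) powr (-1/2) * exp (- t\<^sup>2 / (2 * s))"

definition phi :: "real \<Rightarrow> real" where
  "phi t = (2 * pi) powr (-1/2) * exp (- t\<^sup>2 / 2)"

definition pbar :: "real \<Rightarrow> real \<Rightarrow> real \<Rightarrow> real \<Rightarrow> real" where
  "pbar \<sigma> \<gamma> a g = min 1 (phi_var (\<sigma>\<^sup>2 * \<gamma>) (a - \<sigma> * sqrt \<gamma> * g)
                             / phi_var (\<sigma>\<^sup>2 * \<gamma>) (\<sigma> * sqrt \<gamma> * g))"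

definition Qker :: "real \<Rightarrow> real \<Rightarrow> real \<Rightarrow> (real \<Rightarrow> real) \<Rightarrow> (real \<Rightarrow> ennreal) \<Rightarrow> real \<Rightarrow> ennreal" where
  "Qker \<sigma> cinf \<gamma> \<tau> f w =
     (let x = \<tau> w + \<gamma> * cinf in
       f 0 * (\<integral>\<^sup>+ g. ennreal (pbar \<sigma> \<gamma> x g * phi g) \<partial>lborel)
       + (\<integral>\<^sup>+ g. f (x - 2 * \<sigma> * sqrt \<gamma> * g) * ennreal ((1 - pbar \<sigma> \<gamma> x g) * phi g) \<partial>lborel))"

definition Wstar :: "real \<Rightarrow> real \<Rightarrow> real" where
  "Wstar a w = exp (a * w) - 1"

definition Rtilde :: "real \<Rightarrow> real \<Rightarrow> real \<Rightarrow> real \<Rightarrow> real \<Rightarrow> real" where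
  "Rtilde \<sigma> cinf R1 m a =
     max (max (max 1 R1) ((4 * a * \<sigma>\<^sup>2 + 2 * cinf) / m)) (16 * \<sigma>\<^sup>2 * a / m)"

definition lam :: "real \<Rightarrow> real \<Rightarrow> real \<Rightarrow> real \<Rightarrow> real \<Rightarrow> real" where
  "lam \<sigma> cinf R1 m a = exp (- a * m * Rtilde \<sigma> cinf R1 m a / 8)"

definition Cconst :: "real \<Rightarrow> real \<Rightarrow> real \<Rightarrow> real \<Rightarrow> real" where
  "Cconst \<sigma> cinf gbar a =
     a * (cinf + 2 * a * \<sigma>\<^sup>2) * exp (a * gbar * (cinf + 2 * a * \<sigma>\<^sup>2))
     + 2 * \<sigma>\<^sup>2 * (2 * pi) powr (-1/2) * a * exp ((a + 2 * \<sigma> * sqrt gbar * a)\<^sup>2 / 2)"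

definition Rconst :: "real \<Rightarrow> real \<Rightarrow> real \<Rightarrow> real \<Rightarrow> real \<Rightarrow> real \<Rightarrow> real" where
  "Rconst \<sigma> cinf gbar R1 m a =
     (let lm = lam \<sigma> cinf R1 m a in
      max (Rtilde \<sigma> cinf R1 m a)
          (ln (1 + Cconst \<sigma> cinf gbar a / (- ln lm * lm powr (2 * gbar))) / a))"

definition gamma1 :: "real \<Rightarrow> real \<Rightarrow> real \<Rightarrow> real \<Rightarrow> real \<Rightarrow> real \<Rightarrow> real" where
  "gamma1 \<sigma> cinf gbar R1 m a =
     min (min gbar (1 / (- ln (lam \<sigma> cinf R1 m a)))) (1 / (4 * \<sigma>\<^sup>2))"

definition Bconst :: "real \<Rightarrow> real \<Rightarrow> real \<Rightarrow> real \<Rightarrow> real \<Rightarrow> real \<Rightarrow> real \<Rightarrow> real" where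
  "Bconst \<sigma> cinf gbar R1 L m a =
     exp (a * (cinf + 2 * a * \<sigma>\<^sup>2 + L * Rconst \<sigma> cinf gbar R1 m a))"

definition Dconst :: "real \<Rightarrow> real \<Rightarrow> real \<Rightarrow> real \<Rightarrow> real \<Rightarrow> real \<Rightarrow> real \<Rightarrow> real" where
  "Dconst \<sigma> cinf gbar R1 L m a =
     (let R = Rconst \<sigma> cinf gbar R1 m a; lm = lam \<sigma> cinf R1 m a in
      a * (cinf + 2 * a * \<sigma>\<^sup>2 + L * R) * exp (a * gbar * (cinf + 2 * a * \<sigma>\<^sup>2 + L * R))
      + 2 * \<sigma>\<^sup>2 * (2 * pi) powr (-1/2) * a * exp ((a + 2 * \<sigma> * sqrt gbar * a)\<^sup>2 / 2)
      + 2 * \<sigma>\<^sup>2 * a\<^sup>2 * lm powr (2 * gbar) * Wstar a R)"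

end

theory Submission imports Defs begin

lemma phi_std: "phi t = std_normal_density t"
  unfolding phi_def std_normal_density_def
  by (simp add: powr_minus powr_half_sqrt divide_simps)

lemma phi_nonneg: "0 \<le> phi t" by (simp add: phi_def)

lemma phi_meas[measurable]: "phi \<in> borel_measurable borel"
  unfolding phi_def by measurable

lemma nn_phi: "(\<integral>\<^sup>+g. ennreal (phi g) \<partial>lborel) = 1"
proof -
  have "(\<integral>\<^sup>+g. ennreal (phi g) \<partial>lborel) = ennreal (\<integral>g. normal_density 0 1 g \<partial>lborel)"
    unfolding phi_std
    by (rule nn_integral_eq_integral) (auto simp: normal_density_nonneg integrable_normal_moment[of 1 0 0, simplified])
  then show ?thesis by simp
qed

lemma nn_phi_shift: "(\<integral>\<^sup>+g. ennreal (phi (g + b)) \<partial>lborel) = 1"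
  using nn_integral_real_affine[of "\<lambda>g. ennreal (phi g)" 1 b] nn_phi by (simp add: add.commute)

lemma mgf: fixes a x s :: real shows "(\<integral>\<^sup>+g. ennreal (exp (a * (x - 2 * s * g)) * phi g) \<partial>lborel) = ennreal (exp (a * x + 2 * a\<^sup>2 * s\<^sup>2))"
proof -
  have "\<And>g. exp (a * (x - 2 * s * g)) * phi g = exp (a * x + 2 * a\<^sup>2 * s\<^sup>2) * phi (g + 2 * a * s)"
  proof -
    fix g :: real
    have e: "a * (x - 2 * s * g) + (- g\<^sup>2 / 2) = (a * x + 2 * a\<^sup>2 * s\<^sup>2) + (- (g + 2 * a * s)\<^sup>2 / 2)"
      by (simp add: power2_eq_square field_simps)
    show "exp (a * (x - 2 * s * g)) * phi g = exp (a * x + 2 * a\<^sup>2 * s\<^sup>2) * phi (g + 2 * a * s)"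
    proof -
      have l: "exp (a * (x - 2 * s * g)) * phi g = (2 * pi) powr (-1/2) * exp (a * (x - 2 * s * g) + (- g\<^sup>2 / 2))"
        unfolding phi_def exp_add by simp
      have r: "exp (a * x + 2 * a\<^sup>2 * s\<^sup>2) * phi (g + 2 * a * s) = (2 * pi) powr (-1/2) * exp ((a * x + 2 * a\<^sup>2 * s\<^sup>2) + (- (g + 2 * a * s)\<^sup>2 / 2))"
        unfolding phi_def exp_add by simp
      show ?thesis unfolding l r e ..
    qed
  qed
  then have "(\<integral>\<^sup>+g. ennreal (exp (a * (x - 2 * s * g)) * phi g) \<partial>lborel) = 
     (\<integral>\<^sup>+g. ennreal (exp (a * x + 2 * a\<^sup>2 * s\<^sup>2)) * ennreal (phi (g + 2 * a * s)) \<partial>lborel)"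
    by (simp add: ennreal_mult' phi_nonneg)
  also have "\<dots> = ennreal (exp (a * x + 2 * a\<^sup>2 * s\<^sup>2))"
    by (subst nn_integral_cmult) (auto simp: nn_phi_shift)
  finally show ?thesis .
qed

lemma pbar_meas[measurable]: "(\<lambda>g. pbar \<sigma> \<gamma> x g) \<in> borel_measurable borel"
  unfolding pbar_def phi_var_def by measurable

lemma Wstar_meas[measurable]: "(\<lambda>y. Wstar a y) \<in> borel_measurable borel"
  unfolding Wstar_def by measurable

lemma reflect: fixes h :: "real \<Rightarrow> ennreal" assumes [measurable]: "h \<in> borel_measurable borel"
  shows "(\<integral>\<^sup>+u. h u \<partial>lborel) = (\<integral>\<^sup>+g. h (t - g) \<partial>lborel)"
  using nn_integral_real_affine[of h "-1::real" t] by simp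

lemma cosh_ge: "2 \<le> exp (t::real) + exp (- t)"
proof -
  have p: "exp t > 0" by simp
  have "(exp t - 1)\<^sup>2 \<ge> 0" by simp
  then have "2 * exp t \<le> exp t * exp t + 1" by (simp add: power2_eq_square algebra_simps)
  then have "2 \<le> exp t + 1 / exp t" using p by (simp add: field_simps)
  then show ?thesis by (simp add: exp_minus field_simps)
qed

lemma ratio_phi_var: assumes "S > 0"
  shows "phi_var S t1 / phi_var S t2 = exp ((t2\<^sup>2 - t1\<^sup>2) / (2 * S))"
proof -
  have "phi_var S t1 = phi_var S t2 * exp ((t2\<^sup>2 - t1\<^sup>2) / (2 * S))"
    unfolding phi_var_def mult.assoc exp_add[symmetric]
    using assms by (simp add: field_simps)
  moreover have "phi_var S t2 > 0" unfolding phi_var_def using assms by simp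
  ultimately show ?thesis by simp
qed

lemma key:
  fixes \<sigma> \<gamma> x a :: real
  assumes "\<sigma> > 0" "\<gamma> > 0" "x \<ge> 0" "a > 0"
  shows "(\<integral>\<^sup>+g. ennreal (Wstar a (x - 2 * \<sigma> * sqrt \<gamma> * g)) * ennreal ((1 - pbar \<sigma> \<gamma> x g) * phi g) \<partial>lborel)
     \<le> ennreal (exp (a * x + 2 * a\<^sup>2 * (\<sigma> * sqrt \<gamma>)\<^sup>2) - 1)"
proof -
  define s where "s = \<sigma> * sqrt \<gamma>"
  have s0: "s > 0" unfolding s_def using assms by simp
  have s2: "s\<^sup>2 = \<sigma>\<^sup>2 * \<gamma>" unfolding s_def using assms by (simp add: power_mult_distrib)
  define y where "y g = x - 2 * s * g" for g
  define p where "p g = pbar \<sigma> \<gamma> x g" for g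
  define E where "E = exp (a * x + 2 * a\<^sup>2 * s\<^sup>2)"
  have yrefl: "y (x / s - g) = - y g" for g unfolding y_def using s0 by (simp add: field_simps)
  have p0: "0 \<le> p g" for g unfolding p_def pbar_def phi_var_def by simp
  have p1: "p g \<le> 1" for g unfolding p_def pbar_def by simp
  have prefl: "p g * phi g = phi (x / s - g)" if "y g > 0" for g
  proof -
    have r: "phi_var (\<sigma>\<^sup>2 * \<gamma>) (x - \<sigma> * sqrt \<gamma> * g) / phi_var (\<sigma>\<^sup>2 * \<gamma>) (\<sigma> * sqrt \<gamma> * g)
        = exp (- (x * y g) / (2 * s\<^sup>2))"
      unfolding s2[symmetric] using s0 
      by (subst ratio_phi_var) (auto simp: y_def s_def[symmetric] power2_eq_square algebra_simps)
    have "x * y g \<ge> 0" using that assms by simp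
    then have "exp (- (x * y g) / (2 * s\<^sup>2)) \<le> 1" using s0 by simp
    then have pe: "p g = exp (- (x * y g) / (2 * s\<^sup>2))" unfolding p_def pbar_def r by simp
    have e: "- (x / s - g)\<^sup>2 / 2 = (- g\<^sup>2 / 2) + (- (x * y g) / (2 * s\<^sup>2))"
      unfolding y_def using s0 by (simp add: field_simps power2_eq_square)
    show ?thesis unfolding pe phi_def e exp_add by simp
  qed
  define F where "F g = ennreal (Wstar a (y g)) * ennreal ((1 - p g) * phi g)" for g
  define A1 where "A1 g = ennreal (if y g \<ge> 0 then phi g else 0)" for g
  define A2 where "A2 g = ennreal (if y g > 0 then phi (x / s - g) else 0)" for g
  define B1 where "B1 g = ennreal (if y g \<ge> 0 then exp (a * y g) * phi g else 0)" for g
  define B2 where "B2 g = ennreal (if y g > 0 then exp (a * y (x / s - g)) * phi (x / s - g) else 0)" for g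
  have pw: "F g + A1 g + A2 g \<le> B1 g + B2 g" for g
  proof (cases "y g > 0")
    case True
    have ph: "phi g \<ge> 0" "phi (x / s - g) \<ge> 0" by (simp_all add: phi_nonneg)
    have W: "Wstar a (y g) \<ge> 0" unfolding Wstar_def using True assms by simp
    have c: "2 \<le> exp (a * y g) + exp (- (a * y g))" by (rule cosh_ge)
    have "p g * phi g * (exp (a * y g) + exp (- (a * y g)) - 2) \<ge> 0"
      using c p0 ph by simp
    then have ineq: "Wstar a (y g) * ((1 - p g) * phi g) + phi g + p g * phi g
        \<le> exp (a * y g) * phi g + exp (- (a * y g)) * (p g * phi g)"
      unfolding Wstar_def by (simp add: algebra_simps)
    have "F g + A1 g + A2 g = ennreal (Wstar a (y g) * ((1 - p g) * phi g) + phi g + p g * phi g)"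
      unfolding F_def A1_def A2_def using True W p1 ph prefl[OF True]
      by (simp add: ennreal_mult'[symmetric] ennreal_plus[symmetric] del: ennreal_plus)
    also have "\<dots> \<le> ennreal (exp (a * y g) * phi g + exp (- (a * y g)) * (p g * phi g))"
      using ineq by (rule ennreal_leI)
    also have "\<dots> = B1 g + B2 g"
      unfolding B1_def B2_def using True ph prefl[OF True] p0
      by (simp add: yrefl ennreal_plus[symmetric] del: ennreal_plus)
    finally show ?thesis .
  next
    case False
    show ?thesis
    proof (cases "y g = 0")
      case True
      then show ?thesis unfolding F_def A1_def A2_def B1_def B2_def Wstar_def by simp
    next
      case False
      with \<open>\<not> y g > 0\<close> have "y g < 0" by simp
      then have "Wstar a (y g) \<le> 0" unfolding Wstar_def using assms
        by (simp add: mult_nonneg_nonpos)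
      then show ?thesis using \<open>y g < 0\<close> unfolding F_def A1_def A2_def B1_def B2_def
        by (simp add: ennreal_neg)
    qed
  qed
  have [measurable]: "y \<in> borel_measurable borel" unfolding y_def by measurable
  have [measurable]: "p \<in> borel_measurable borel" unfolding p_def by measurable
  have mF[measurable]: "F \<in> borel_measurable borel" unfolding F_def by measurable
  have mA1[measurable]: "A1 \<in> borel_measurable borel" unfolding A1_def by measurable
  have mA2[measurable]: "A2 \<in> borel_measurable borel" unfolding A2_def by measurable
  have mB1[measurable]: "B1 \<in> borel_measurable borel" unfolding B1_def by measurable
  have mB2[measurable]: "B2 \<in> borel_measurable borel" unfolding B2_def by measurable
  have "integral\<^sup>N lborel F + integral\<^sup>N lborel A1 + integral\<^sup>N lborel A2 = (\<integral>\<^sup>+g. F g + A1 g + A2 g \<partial>lborel)"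
    by (simp add: nn_integral_add)
  also have "\<dots> \<le> (\<integral>\<^sup>+g. B1 g + B2 g \<partial>lborel)"
    by (rule nn_integral_mono) (rule pw)
  also have "\<dots> = integral\<^sup>N lborel B1 + integral\<^sup>N lborel B2"
    by (simp add: nn_integral_add)
  finally have main: "integral\<^sup>N lborel F + integral\<^sup>N lborel A1 + integral\<^sup>N lborel A2 \<le> integral\<^sup>N lborel B1 + integral\<^sup>N lborel B2" .
  define A2' where "A2' u = ennreal (if y u < 0 then phi u else 0)" for u
  define B2' where "B2' u = ennreal (if y u < 0 then exp (a * y u) * phi u else 0)" for u
  have [measurable]: "A2' \<in> borel_measurable borel" unfolding A2'_def by measurable
  have [measurable]: "B2' \<in> borel_measurable borel" unfolding B2'_def by measurable
  have iA2: "integral\<^sup>N lborel A2 = integral\<^sup>N lborel A2'"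
    by (subst reflect[of A2' "x / s"], simp, rule nn_integral_cong) (simp add: A2_def A2'_def yrefl)
  have iB2: "integral\<^sup>N lborel B2 = integral\<^sup>N lborel B2'"
    by (subst reflect[of B2' "x / s"], simp, rule nn_integral_cong) (simp add: B2_def B2'_def yrefl)
  have "integral\<^sup>N lborel A1 + integral\<^sup>N lborel A2 = (\<integral>\<^sup>+g. A1 g + A2' g \<partial>lborel)"
    unfolding iA2 by (simp add: nn_integral_add)
  also have "\<dots> = (\<integral>\<^sup>+g. ennreal (phi g) \<partial>lborel)"
    by (rule nn_integral_cong) (auto simp: A1_def A2'_def)
  finally have sA: "integral\<^sup>N lborel A1 + integral\<^sup>N lborel A2 = 1" using nn_phi by simp
  have "integral\<^sup>N lborel B1 + integral\<^sup>N lborel B2 = (\<integral>\<^sup>+g. B1 g + B2' g \<partial>lborel)"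
    unfolding iB2 by (simp add: nn_integral_add)
  also have "\<dots> = (\<integral>\<^sup>+g. ennreal (exp (a * (x - 2 * s * g)) * phi g) \<partial>lborel)"
    by (rule nn_integral_cong) (auto simp: B1_def B2'_def y_def)
  finally have sB: "integral\<^sup>N lborel B1 + integral\<^sup>N lborel B2 = ennreal E" using mgf unfolding E_def by simp
  have E1: "E \<ge> 1" unfolding E_def using assms by simp
  have m2: "integral\<^sup>N lborel F + 1 \<le> ennreal E"
    using main unfolding add.assoc sA sB .
  have "ennreal E = ennreal ((E - 1) + 1)" by simp
  also have "\<dots> = ennreal (E - 1) + ennreal 1" using E1 by (intro ennreal_plus) auto
  finally have "ennreal E = ennreal (E - 1) + 1" by simp
  then have "1 + integral\<^sup>N lborel F \<le> 1 + ennreal (E - 1)"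
    using m2 by (simp add: add.commute)
  then have "integral\<^sup>N lborel F \<le> ennreal (E - 1)" by (simp add: ennreal_add_left_cancel_le)
  moreover have "integral\<^sup>N lborel F = (\<integral>\<^sup>+g. ennreal (Wstar a (x - 2 * \<sigma> * sqrt \<gamma> * g)) * ennreal ((1 - pbar \<sigma> \<gamma> x g) * phi g) \<partial>lborel)"
    unfolding F_def y_def p_def s_def by (simp add: mult.assoc)
  ultimately show ?thesis unfolding E_def s_def by simp
qed

lemma expm1_le: assumes "t \<ge> (0::real)" shows "exp t - 1 \<le> t * exp t"
proof -
  have "1 - t \<le> exp (- t)" using exp_ge_add_one_self[of "-t"] by simp
  then have "(1 - t) * exp t \<le> exp (- t) * exp t" by (simp add: mult_right_mono)
  then show ?thesis by (simp add: exp_minus algebra_simps)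
qed

theorem proposition46:
  fixes \<sigma> gbar cinf R1 L m a :: real
    and \<tau> :: "real \<Rightarrow> real \<Rightarrow> real"
  assumes "\<sigma> > 0" and "gbar > 0" and "cinf \<ge> 0"
    and "R1 \<ge> 0" and "L \<ge> 0" and "m > 0"
    and tau_mono: "\<And>\<gamma>. 0 < \<gamma> \<Longrightarrow> \<gamma> \<le> gbar \<Longrightarrow> mono_on {0..} (\<tau> \<gamma>)"
    and tau_nonneg: "\<And>\<gamma> r. 0 < \<gamma> \<Longrightarrow> \<gamma> \<le> gbar \<Longrightarrow> 0 \<le> r \<Longrightarrow> 0 \<le> \<tau> \<gamma> r"
    and tau_zero: "\<And>\<gamma>. 0 < \<gamma> \<Longrightarrow> \<gamma> \<le> gbar \<Longrightarrow> \<tau> \<gamma> 0 = 0"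
    and tau_L: "\<And>\<gamma>. 0 < \<gamma> \<Longrightarrow> \<gamma> \<le> gbar \<Longrightarrow> \<forall>r>0. \<tau> \<gamma> r / r \<le> 1 + \<gamma> * L"
    and tau_m: "\<And>\<gamma>. 0 < \<gamma> \<Longrightarrow> \<gamma> \<le> gbar \<Longrightarrow> \<forall>r>R1. \<tau> \<gamma> r / r \<le> 1 - \<gamma> * m"
    and "a > 0"
    and "w \<ge> 0"
    and "0 < \<gamma>" and "\<gamma> \<le> gamma1 \<sigma> cinf gbar R1 m a"
  shows "Qker \<sigma> cinf \<gamma> (\<tau> \<gamma>) (\<lambda>x. ennreal (Wstar a x)) w
    \<le> ennreal (lam \<sigma> cinf R1 m a powr \<gamma> * Wstar a w
                 * indicator {Rconst \<sigma> cinf gbar R1 m a..} w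
             + Bconst \<sigma> cinf gbar R1 L m a powr \<gamma> * Wstar a w
                 * indicator {0..<Rconst \<sigma> cinf gbar R1 m a} w
             + \<gamma> * Dconst \<sigma> cinf gbar R1 L m a
                 * indicator {0..<Rconst \<sigma> cinf gbar R1 m a} w)"
proof -
  note as = assms(1-6) assms(12-15)
  have gg: "\<gamma> \<le> gbar" using assms(15) unfolding gamma1_def by simp
  define t where "t = \<tau> \<gamma>"
  have t0: "t 0 = 0" unfolding t_def using tau_zero[OF assms(14) gg] .
  have tn: "t w \<ge> 0" unfolding t_def using tau_nonneg[OF assms(14) gg assms(13)] .
  have tmono: "mono_on {0..} t" unfolding t_def using tau_mono[OF assms(14) gg] .
  have tL: "t r \<le> (1 + \<gamma> * L) * r" if "r > 0" for r
    using tau_L[OF assms(14) gg] that unfolding t_def by (simp add: divide_le_eq)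
  have tm: "t r \<le> (1 - \<gamma> * m) * r" if "r > R1" for r
  proof -
    have "r > 0" using that assms(4) by simp
    then show ?thesis using tau_m[OF assms(14) gg] that unfolding t_def by (simp add: divide_le_eq)
  qed
  define K where "K = cinf + 2 * a * \<sigma>\<^sup>2"
  define x where "x = t w + \<gamma> * cinf"
  have x0: "x \<ge> 0" unfolding x_def using tn as by simp
  have "Qker \<sigma> cinf \<gamma> t (\<lambda>x. ennreal (Wstar a x)) w
     = (\<integral>\<^sup>+g. ennreal (Wstar a (x - 2 * \<sigma> * sqrt \<gamma> * g)) * ennreal ((1 - pbar \<sigma> \<gamma> x g) * phi g) \<partial>lborel)"
    unfolding Qker_def Let_def x_def by (simp add: Wstar_def)
  also have "\<dots> \<le> ennreal (exp (a * x + 2 * a\<^sup>2 * (\<sigma> * sqrt \<gamma>)\<^sup>2) - 1)"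
    by (rule key) (use as x0 in auto)
  also have "a * x + 2 * a\<^sup>2 * (\<sigma> * sqrt \<gamma>)\<^sup>2 = a * t w + a * \<gamma> * K"
    unfolding x_def K_def using as by (simp add: power_mult_distrib algebra_simps power2_eq_square)
  finally have Q: "Qker \<sigma> cinf \<gamma> t (\<lambda>x. ennreal (Wstar a x)) w \<le> ennreal (exp (a * t w + a * \<gamma> * K) - 1)" .
  define Rt where "Rt = Rtilde \<sigma> cinf R1 m a"
  define R where "R = Rconst \<sigma> cinf gbar R1 m a"
  have Rt1: "Rt \<ge> 1" "Rt \<ge> R1" "Rt \<ge> (4 * a * \<sigma>\<^sup>2 + 2 * cinf) / m"
    unfolding Rt_def Rtilde_def by auto
  have RRt: "R \<ge> Rt" unfolding R_def Rconst_def Rt_def Let_def by simp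
  have real: "exp (a * t w + a * \<gamma> * K) - 1 \<le> lam \<sigma> cinf R1 m a powr \<gamma> * Wstar a w
                 * indicator {R..} w
             + Bconst \<sigma> cinf gbar R1 L m a powr \<gamma> * Wstar a w
                 * indicator {0..<R} w
             + \<gamma> * Dconst \<sigma> cinf gbar R1 L m a
                 * indicator {0..<R} w"
  proof (cases "w \<ge> R")
    case True
    have wR1: "w \<ge> R1" "w \<ge> Rt" using True RRt Rt1 by auto
    have twm: "t w \<le> (1 - \<gamma> * m) * w"
    proof (rule ccontr)
      assume "\<not> ?thesis"
      then have d: "t w - (1 - \<gamma> * m) * w > 0" by simp
      define e where "e = (t w - (1 - \<gamma> * m) * w) / (\<bar>1 - \<gamma> * m\<bar> + 1)"
      have e0: "e > 0" unfolding e_def using d by simp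
      have "\<bar>1 - \<gamma> * m\<bar> * e < t w - (1 - \<gamma> * m) * w"
        unfolding e_def using d by (simp add: field_simps)
      moreover have "(1 - \<gamma> * m) * e \<le> \<bar>1 - \<gamma> * m\<bar> * e" using e0 by (simp add: mult_right_mono)
      moreover have "t w \<le> t (w + e)" using tmono as e0 by (auto intro: mono_onD)
      moreover have "t (w + e) \<le> (1 - \<gamma> * m) * (w + e)" using tm wR1 e0 by simp
      ultimately show False by (simp add: algebra_simps)
    qed
    have Kpos: "2 * K \<le> m * w"
    proof -
      have "(4 * a * \<sigma>\<^sup>2 + 2 * cinf) / m \<le> w" using Rt1 wR1 by linarith
      then show ?thesis unfolding K_def using as by (simp add: divide_le_eq algebra_simps)
    qed
    have "a * t w + a * \<gamma> * K \<le> a * ((1 - \<gamma> * m) * w) + a * \<gamma> * K"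
      using twm as by simp
    also have "\<dots> = a * w - a * \<gamma> * (m * w - K)" by (simp add: algebra_simps)
    also have "\<dots> \<le> a * w - a * \<gamma> * (m * w / 2)"
    proof -
      have "m * w / 2 \<le> m * w - K" using Kpos by simp
      then show ?thesis using as by (simp add: mult_left_mono)
    qed
    also have "\<dots> \<le> a * w + \<gamma> * (- a * m * Rt / 8)"
    proof -
      have "m * Rt / 8 \<le> m * w / 2" using wR1 Rt1 as by (simp add: divide_le_eq)
      then have "a * \<gamma> * (m * Rt / 8) \<le> a * \<gamma> * (m * w / 2)" using as by (simp add: mult_left_mono)
      then show ?thesis by (simp add: algebra_simps)
    qed
    finally have ex: "a * t w + a * \<gamma> * K \<le> a * w + \<gamma> * (- a * m * Rt / 8)" .
    define Lm where "Lm = exp (\<gamma> * (- a * m * Rt / 8))"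
    have Lmeq: "lam \<sigma> cinf R1 m a powr \<gamma> = Lm" unfolding lam_def Lm_def Rt_def powr_def by simp
    have Lm1: "Lm \<le> 1" "Lm \<ge> 0" unfolding Lm_def using as Rt1 by (auto simp: mult_nonneg_nonneg)
    have "exp (a * t w + a * \<gamma> * K) - 1 \<le> exp (a * w) * Lm - 1"
      using ex unfolding Lm_def by (simp add: exp_add[symmetric])
    also have "\<dots> \<le> Lm * (exp (a * w) - 1)" using Lm1 by (simp add: algebra_simps)
    finally show ?thesis using True unfolding Lmeq Wstar_def by simp
  next
    case False
    have tw: "t w \<le> (1 + \<gamma> * L) * w"
      using tL[of w] t0 as by (cases "w = 0") auto
    define \<beta> where "\<beta> = a * (K + L * R)"
    have b0: "\<beta> \<ge> 0" unfolding \<beta>_def K_def using as RRt Rt1 by auto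
    have Beq: "Bconst \<sigma> cinf gbar R1 L m a powr \<gamma> = exp (\<gamma> * \<beta>)"
      unfolding Bconst_def powr_def \<beta>_def K_def R_def by simp
    have "a * t w + a * \<gamma> * K \<le> a * ((1 + \<gamma> * L) * w) + a * \<gamma> * K"
      using tw as by simp
    also have "\<dots> = a * w + \<gamma> * (a * (K + L * w))" by (simp add: algebra_simps)
    also have "\<dots> \<le> a * w + \<gamma> * \<beta>"
    proof -
      have "L * w \<le> L * R" using False as by (simp add: mult_left_mono)
      then show ?thesis unfolding \<beta>_def using as by (simp add: mult_left_mono)
    qed
    finally have ex: "a * t w + a * \<gamma> * K \<le> a * w + \<gamma> * \<beta>" .
    have "exp (a * t w + a * \<gamma> * K) - 1 \<le> exp (\<gamma> * \<beta>) * exp (a * w) - 1"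
      using ex by (simp add: exp_add[symmetric] add.commute)
    also have "\<dots> = exp (\<gamma> * \<beta>) * (exp (a * w) - 1) + (exp (\<gamma> * \<beta>) - 1)" by (simp add: algebra_simps)
    also have "exp (\<gamma> * \<beta>) - 1 \<le> \<gamma> * \<beta> * exp (\<gamma> * \<beta>)" using expm1_le[of "\<gamma> * \<beta>"] b0 as by simp
    also have "\<dots> \<le> \<gamma> * (\<beta> * exp (gbar * \<beta>))"
    proof -
      have "exp (\<gamma> * \<beta>) \<le> exp (gbar * \<beta>)" using gg b0 by (simp add: mult_right_mono)
      then show ?thesis using as b0 by (simp add: mult_left_mono)
    qed
    also have "\<dots> \<le> \<gamma> * Dconst \<sigma> cinf gbar R1 L m a"
    proof -
      have W0: "Wstar a R \<ge> 0" unfolding Wstar_def using as RRt Rt1 by simp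
      have "\<beta> * exp (gbar * \<beta>) \<le> Dconst \<sigma> cinf gbar R1 L m a"
        unfolding Dconst_def Let_def R_def[symmetric] \<beta>_def K_def using W0 as
        by (simp add: algebra_simps)
      then show ?thesis using as by (simp add: mult_left_mono)
    qed
    finally show ?thesis using False as unfolding Beq Wstar_def by simp
  qed
  show ?thesis
    using Q real unfolding t_def R_def by (auto intro: order.trans ennreal_leI)
qed
end
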